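(* Let $\lambda>0$ and $0<\nu\le1$. The solution $u_\nu$ of $\frac{\partial^{\nu}u}{\partial t^{\nu}}=\lambda^2\frac{\partial^2u}{\partial x^2}$, $x\in\mathbb{R}$, $t>0$, $u(x,0)=\delta(x)$, satisfies, for $x\neq0$, \[ u_\nu(x,t)=\frac1\nu\,\frac{\lambda^{2/\nu}t}{|x|^{2/\nu+1}}\,p_{\nu/2}\!\left(\frac{\lambda^{2/\nu}t}{|x|^{2/\nu}};\frac\nu2,1\right)=\frac{1}{\nu|x|^{2/\nu+1}}\,p_{\nu/2}\!\left(\frac{1}{|x|^{2/\nu}};\frac\nu2,\frac{1}{\lambda t^{\nu/2}}\right). \]
   Context: Fractional derivative in the Dzherbashyan–Caputo sense: $\frac{\partial^{\nu}u}{\partial t^{\nu}}(x,t)=\frac{1}{\Gamma(1-\nu)}\int_0^t (t-s)^{-\nu}\frac{\partial u}{\partial s}(x,s)\,ds$ for $0<\nu<1$, ordinary derivative for $\nu=1$. The solution is $u_\nu(x,t)=\frac{1}{2\lambda t^{\nu/2}}\sum_{k\ge0}\frac{(-|x|/(\lambda t^{\nu/2}))^k}{k!\,\Gamma(-\nu k/2+1-\nu/2)}$. For $\alpha\neq1$, the stable density is $p_\alpha(x;\gamma,\eta)=\frac{1}{2\pi}\int_{-\infty}^{+\infty}e^{-i\beta x}\exp\{-\eta|\beta|^\alpha e^{-i\frac{\pi\gamma}{2}\frac{\beta}{|\beta|}}\}\,d\beta$. *)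

theory Defs
  imports "HOL-Analysis.Analysis"
begin

text \<open>Series solution of the time-fractional diffusion equation
  with initial datum delta (Dzherbashyan-Caputo derivative of order nu).
  The reciprocal Gamma function rGamma is used, so 1/Gamma at poles is 0.\<close>
definition u_nu :: "real \<Rightarrow> real \<Rightarrow> real \<Rightarrow> real \<Rightarrow> real" where
  "u_nu nu lam x t =
     1 / (2 * lam * t powr (nu/2)) *
     (\<Sum>k. (- \<bar>x\<bar> / (lam * t powr (nu/2))) ^ k / fact k
            * rGamma (- nu * real k / 2 + 1 - nu / 2))"

text \<open>Stable density p_alpha(x; gamma, eta), given by its Fourier inversion
  integral (sgn b plays the role of b/|b|; the value at b = 0 is irrelevant).\<close>
definition p_stable :: "real \<Rightarrow> real \<Rightarrow> real \<Rightarrow> real \<Rightarrow> complex" where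
  "p_stable alpha gam eta x =
     1 / (2 * complex_of_real pi) *
     integral UNIV (\<lambda>b::real.
        exp (- \<i> * complex_of_real (b * x)) *
        exp (- complex_of_real (eta * \<bar>b\<bar> powr alpha) *
             exp (- \<i> * complex_of_real (pi * gam / 2 * sgn b))))"

end

theory Submission
  imports Defs "HOL-Complex_Analysis.Complex_Analysis"
begin


definition wc :: "real \<Rightarrow> complex" where "wc a = exp (- \<i> * of_real (pi*a/2))"
definition gf :: "real \<Rightarrow> real \<Rightarrow> real \<Rightarrow> complex" where
  "gf a e b = exp (- of_real (e * b powr a) * wc a)"

lemma Re_wc: "Re (wc a) = cos (pi*a/2)"
  by (simp add: wc_def Re_exp)

lemma norm_wc: "norm (wc a) = 1"
  by (simp add: wc_def norm_exp_eq_Re)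

lemma norm_gf: "norm (gf a e b) = exp (- (e * cos (pi*a/2)) * b powr a)"
  by (simp add: gf_def norm_exp_eq_Re Re_wc)

lemma integrable_bound_cont:
  fixes f :: "real \<Rightarrow> 'b::euclidean_space"
  assumes "continuous_on S f" "S \<in> sets lebesgue" "g integrable_on S" "\<And>x. x \<in> S \<Longrightarrow> norm (f x) \<le> g x"
  shows "f integrable_on S"
  by (rule measurable_bounded_by_integrable_imp_integrable[OF continuous_imp_measurable_on_sets_lebesgue])
     (use assms in auto)

lemma ln_bound:
  assumes k: "k > 0" and a: "a > 0" and b: "(b::real) > 0"
  shows "2 * ln b \<le> k * b powr a + 4 / (a^2 * k)"
proof -
  define u where "u = b powr (a/2)"
  have u: "u > 0" using b by (simp add: u_def)
  have "ln u = (a/2) * ln b" using b by (simp add: u_def ln_powr)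
  moreover have "ln u \<le> u" using u ln_le_minus_one[of u] by simp
  ultimately have 1: "ln b \<le> (2/a) * u" using a by (simp add: field_simps)
  have uu: "u * u = b powr a" using b by (simp add: u_def powr_add[symmetric])
  have "0 \<le> k * (u - 2/(a*k))^2" using k by simp
  moreover have "k * (u - 2/(a*k))^2 = k * (u*u) - (4/a) * u + 4/(a^2*k)" using a k
    by (simp add: power2_eq_square field_simps)
  ultimately have "(4/a) * u \<le> k * (u*u) + 4/(a^2*k)" by linarith
  with 1 uu show ?thesis by simp
qed

lemma exp_powr_bound:
  assumes k: "k > 0" and a: "a > 0" and b: "(b::real) > 0"
  shows "exp (-k * b powr a) \<le> exp (4 / (a^2 * k)) * b powr (-2)"
proof -
  have "exp (-k * b powr a) \<le> exp (4 / (a^2 * k) - 2 * ln b)"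
    using ln_bound[OF k a b] by simp
  also have "\<dots> = exp (4 / (a^2 * k)) * b powr (-2)"
    using b by (simp add: exp_diff powr_def exp_minus field_simps)
  finally show ?thesis .
qed

lemma exp_powr_integrable:
  assumes k: "(k::real) > 0" and a: "a > 0"
  shows "(\<lambda>b. exp (-k * b powr a)) integrable_on {0..}"
proof -
  have c: "continuous_on {0..} (\<lambda>b::real. exp (-k * b powr a))"
    using a by (intro continuous_intros continuous_on_powr') auto
  have i1: "(\<lambda>b::real. exp (-k * b powr a)) integrable_on {0..1}"
    by (rule integrable_continuous_interval) (rule continuous_on_subset[OF c], auto)
  have "(\<lambda>b::real. b powr (-2)) integrable_on {1..}"
    using has_integral_powr_to_inf[of "-2" 1] by (auto simp: integrable_on_def)
  from integrable_cmul[OF this, of "exp (4 / (a^2 * k))"]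
  have g: "(\<lambda>b::real. exp (4 / (a^2 * k)) * b powr (-2)) integrable_on {1..}"
    by simp
  have i2: "(\<lambda>b::real. exp (-k * b powr a)) integrable_on {1..}"
    by (rule integrable_bound_cont[OF continuous_on_subset[OF c] _ g]) (use exp_powr_bound[OF k a] in auto)
  show ?thesis
    by (rule integrable_Un'[OF i1 i2]) auto
qed



definition Phi :: "real \<Rightarrow> real \<Rightarrow> complex \<Rightarrow> complex" where
  "Phi a e z = integral {0..} (\<lambda>b. exp (- z * of_real b) * gf a e b)"
definition Phin :: "real \<Rightarrow> real \<Rightarrow> nat \<Rightarrow> complex \<Rightarrow> complex" where
  "Phin a e n z = integral {0..real n} (\<lambda>b. exp (- z * of_real b) * gf a e b)"

lemma cont_gf: "a > 0 \<Longrightarrow> continuous_on {0..} (gf a e)"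
  unfolding gf_def by (intro continuous_intros continuous_on_powr') auto

lemma integrable_restrict_sub:
  fixes f :: "'a::euclidean_space \<Rightarrow> 'b::banach"
  shows "f integrable_on S \<Longrightarrow> S \<subseteq> T \<Longrightarrow> (\<lambda>x. if x \<in> S then f x else 0) integrable_on T"
  using has_integral_restrict unfolding integrable_on_def by blast

context
  fixes a e :: real
  assumes a: "0 < a" "a < 1" and e: "0 < e"
begin

definition kk where "kk = e * cos (pi*a/2)"

lemma kk_pos: "kk > 0"
proof -
  have "cos (pi*a/2) > 0" using a by (intro cos_gt_zero) (auto simp: field_simps)
  thus ?thesis using e by (simp add: kk_def)
qed

lemma norm_integrand:
  assumes "Re z \<ge> 0" "b \<ge> 0"
  shows "norm (exp (- z * of_real b) * gf a e b) \<le> exp (- kk * b powr a)"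
proof -
  have "norm (exp (- z * of_real b)) \<le> 1"
    using assms by (simp add: norm_exp_eq_Re mult_nonneg_nonneg)
  thus ?thesis
    by (simp add: norm_mult norm_gf kk_def mult_left_le_one_le)
qed

lemma h_int: "(\<lambda>b. exp (- kk * b powr a)) integrable_on {0..}"
  using exp_powr_integrable[OF kk_pos a(1)] by simp

lemma cont_integrand: "continuous_on {0..} (\<lambda>b. exp (- z * of_real b) * gf a e b)"
  using cont_gf[OF a(1)] by (intro continuous_intros) auto

lemma integrand_int:
  assumes "Re z \<ge> 0"
  shows "(\<lambda>b. exp (- z * of_real b) * gf a e b) integrable_on {0..}"
  by (rule integrable_bound_cont[OF cont_integrand _ h_int norm_integrand]) (use assms in auto)

lemma tail_int: "(\<lambda>b. if b \<in> {0..real n} then 0 else exp (- kk * b powr a)) integrable_on {0..}"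
proof -
  have "(\<lambda>b. exp (- kk * b powr a)) integrable_on {0..real n}"
    by (rule integrable_on_subinterval[OF h_int]) auto
  hence "(\<lambda>b. if b \<in> {0..real n} then exp (- kk * b powr a) else 0) integrable_on {0..}"
    by (rule integrable_restrict_sub) auto
  from integrable_diff[OF h_int this]
  show ?thesis by (rule integrable_eq) auto
qed

lemma tail_tendsto:
  "(\<lambda>n. integral {0..} (\<lambda>b. if b \<in> {0..real n} then 0 else exp (- kk * b powr a))) \<longlonglongrightarrow> 0"
proof -
  let ?f = "\<lambda>n b. if b \<in> {0..real n} then 0 else exp (- kk * b powr a)"
  have le: "norm (?f n x) \<le> exp (- kk * x powr a)" if "x \<in> {0..}" for n x
    by auto
  have conv: "(\<lambda>n. ?f n x) \<longlonglongrightarrow> 0" if "x \<in> {0..}" for x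
  proof -
    obtain N :: nat where "x \<le> real N" using real_arch_simple by blast
    hence "\<forall>n\<ge>N. ?f n x = 0"
      using that by auto
    hence "eventually (\<lambda>n. ?f n x = 0) sequentially"
      unfolding eventually_at_top_linorder by blast
    thus ?thesis
      by (rule tendsto_eventually)
  qed
  have "(\<lambda>n. integral {0..} (?f n)) \<longlonglongrightarrow> integral {0..} (\<lambda>b. 0::real)"
    using Equivalence_Lebesgue_Henstock_Integration.dominated_convergence(2)[OF tail_int h_int le conv] by simp
  thus ?thesis by simp
qed

lemma Phin_diff:
  assumes "Re z \<ge> 0"
  shows "norm (Phin a e n z - Phi a e z)
           \<le> integral {0..} (\<lambda>b. if b \<in> {0..real n} then 0 else exp (- kk * b powr a))"
proof -
  let ?f = "\<lambda>b. exp (- z * of_real b) * gf a e b"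
  have i: "?f integrable_on {0..}" using integrand_int[OF assms] .
  have "?f integrable_on {0..real n}"
    by (rule integrable_on_subinterval[OF i]) auto
  hence r: "((\<lambda>b. if b \<in> {0..real n} then ?f b else 0) has_integral Phin a e n z) {0..}"
    unfolding Phin_def by (subst has_integral_restrict) (auto simp: has_integral_integral)
  have "((\<lambda>b. ?f b - (if b \<in> {0..real n} then ?f b else 0)) has_integral (Phi a e z - Phin a e n z)) {0..}"
    unfolding Phi_def by (intro has_integral_diff r integrable_integral i)
  hence d: "((\<lambda>b. if b \<in> {0..real n} then 0 else ?f b) has_integral (Phi a e z - Phin a e n z)) {0..}"
    by (rule has_integral_eq[rotated]) auto
  note ig = tail_int[of n]
  have "norm (integral {0..} (\<lambda>b. if b \<in> {0..real n} then 0 else ?f b))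
          \<le> integral {0..} (\<lambda>b. if b \<in> {0..real n} then 0 else exp (- kk * b powr a))"
    by (rule Henstock_Kurzweil_Integration.integral_norm_bound_integral[OF has_integral_integrable[OF d] ig])
       (use norm_integrand[OF assms] in auto)
  hence "norm (Phi a e z - Phin a e n z)
          \<le> integral {0..} (\<lambda>b. if b \<in> {0..real n} then 0 else exp (- kk * b powr a))"
    using integral_unique[OF d] by simp
  thus ?thesis by (simp add: norm_minus_commute)
qed

lemma Phin_unif: "uniform_limit {z. Re z \<ge> 0} (Phin a e) (Phi a e) sequentially"
proof (rule uniform_limitI)
  fix \<epsilon> :: real assume "\<epsilon> > 0"
  from order_tendstoD(2)[OF tail_tendsto this]
  show "\<forall>\<^sub>F n in sequentially. \<forall>z\<in>{z. Re z \<ge> 0}. dist (Phin a e n z) (Phi a e z) < \<epsilon>"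
    by eventually_elim (use Phin_diff in \<open>auto simp: dist_norm intro: le_less_trans\<close>)
qed

end


lemma Phin_holo:
  assumes a: "a > 0"
  shows "Phin a e n holomorphic_on UNIV"
proof -
  have "(\<lambda>z. integral (cbox 0 (real n)) (\<lambda>b. exp (- z * of_real b) * gf a e b)) holomorphic_on UNIV"
  proof (rule leibniz_rule_holomorphic[where fx="\<lambda>z b. - of_real b * exp (- z * of_real b) * gf a e b"])
    fix z :: complex and t :: real
    show "((\<lambda>z. exp (- z * of_real t) * gf a e t) has_field_derivative
            - of_real t * exp (- z * of_real t) * gf a e t) (at z within UNIV)"
      by (auto intro!: derivative_eq_intros)
  next
    fix z :: complex
    show "(\<lambda>b. exp (- z * of_real b) * gf a e b) integrable_on cbox 0 (real n)"
    proof (rule integrable_continuous)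
      have "continuous_on {0..real n} (gf a e)"
        by (rule continuous_on_subset[OF cont_gf[OF a]]) auto
      thus "continuous_on (cbox 0 (real n)) (\<lambda>b. exp (- z * of_real b) * gf a e b)"
        by (auto intro!: continuous_intros)
    qed
  next
    show "continuous_on (UNIV \<times> cbox 0 (real n))
           (\<lambda>(z, b). - of_real b * exp (- z * of_real b) * gf a e b)"
      unfolding gf_def split_beta using a
      by (intro continuous_intros continuous_on_powr') auto
  qed auto
  thus ?thesis unfolding Phin_def by simp
qed

context
  fixes a e :: real
  assumes a: "0 < a" "a < 1" and e: "0 < e"
begin

lemma Phi_cont: "continuous_on {z. Re z \<ge> 0} (Phi a e)"
  by (rule uniform_limit_theorem[OF _ Phin_unif[OF a e]])
     (auto intro!: always_eventually holomorphic_on_imp_continuous_on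
        holomorphic_on_subset[OF Phin_holo[OF a(1)]])

lemma Phi_holo: "Phi a e holomorphic_on {z. Re z > 0}"
proof -
  have "Phi a e analytic_on {z. Re z > 0}"
    unfolding analytic_on_def
  proof
    fix z0 :: complex assume z0: "z0 \<in> {z. Re z > 0}"
    define r where "r = Re z0 / 2"
    have r: "r > 0" using z0 by (simp add: r_def)
    have sub: "cball z0 r \<subseteq> {z. Re z \<ge> 0}"
    proof
      fix w assume "w \<in> cball z0 r"
      hence "cmod (z0 - w) \<le> r" by (simp add: dist_norm)
      moreover have "\<bar>Re (z0 - w)\<bar> \<le> cmod (z0 - w)" by (rule abs_Re_le_cmod)
      ultimately show "w \<in> {z. Re z \<ge> 0}" using z0 by (auto simp: r_def)
    qed
    obtain "continuous_on (cball z0 r) (Phi a e)" "Phi a e holomorphic_on ball z0 r"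
      by (rule holomorphic_uniform_limit[OF _ uniform_limit_on_subset[OF Phin_unif[OF a e] sub]])
         (auto intro!: always_eventually holomorphic_on_imp_continuous_on
            holomorphic_on_subset[OF Phin_holo[OF a(1)]])
    thus "\<exists>r>0. Phi a e holomorphic_on ball z0 r" using r by blast
  qed
  thus ?thesis by (rule analytic_imp_holomorphic)
qed

end


lemma gamma_scaled:
  assumes r: "(r::real) > 0" and s: "(s::real) \<ge> 0"
  shows "((\<lambda>x. x powr s * exp (- r * x)) has_integral Gamma (s+1) / r powr (s+1)) {0..}"
proof -
  define f where "f = (\<lambda>t::real. t powr s / exp t)"
  have fi: "(f has_integral Gamma (s+1)) {0..}"
    using Gamma_integral_real[of "s+1"] s by (simp add: f_def)
  have fa: "f absolutely_integrable_on {0..}"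
    by (rule nonnegative_absolutely_integrable_1) (use fi in \<open>auto simp: f_def integrable_on_def\<close>)
  have img: "(\<lambda>x. r * x) ` {0..} = {0..}"
  proof
    show "{0..} \<subseteq> (\<lambda>x. r * x) ` {0..}"
    proof
      fix t :: real assume "t \<in> {0..}"
      hence "t = r * (t / r)" "t / r \<in> {0..}" using r by auto
      thus "t \<in> (\<lambda>x. r * x) ` {0..}" by blast
    qed
  qed (use r in auto)
  have cv: "(\<lambda>x. \<bar>r\<bar> * f (r * x)) absolutely_integrable_on {0..} \<and>
           integral {0..} (\<lambda>x. \<bar>r\<bar> * f (r * x)) = Gamma (s+1)"
    by (subst has_absolute_integral_change_of_variables_1'[where g="\<lambda>x. r * x" and g'="\<lambda>_. r"])
       (use r fa fi img in \<open>auto intro!: derivative_eq_intros inj_onI simp: integral_unique\<close>)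
  hence "((\<lambda>x. \<bar>r\<bar> * f (r * x)) has_integral Gamma (s+1)) {0..}"
    using set_lebesgue_integral_eq_integral(1) absolutely_integrable_on_def has_integral_integral by metis
  hence "((\<lambda>x. (1 / r powr (s+1)) * (\<bar>r\<bar> * f (r * x))) has_integral (1 / r powr (s+1)) * Gamma (s+1)) {0..}"
    by (rule has_integral_mult_right)
  thus ?thesis
  proof (rule has_integral_eq_rhs[OF has_integral_eq[rotated]], goal_cases)
    case (1 x)
    hence "x \<ge> 0" by simp
    hence "(r * x) powr s = r powr s * x powr s" using r by (simp add: powr_mult)
    moreover have "r powr (s+1) = r powr s * r" using r by (simp add: powr_add)
    ultimately show ?case using r by (simp add: f_def exp_minus field_simps)
  next
    case 2 thus ?case by simp
  qed
qed



lemma norm_expsum: "norm (\<Sum>k<N. (z::complex)^k /\<^sub>R fact k) \<le> exp (norm z)"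
proof -
  have "norm (\<Sum>k<N. z^k /\<^sub>R fact k) \<le> (\<Sum>k<N. norm z ^ k /\<^sub>R fact k)"
    by (rule order.trans[OF norm_sum]) (simp add: norm_power field_simps)
  also have "\<dots> \<le> (\<Sum>k. norm z ^ k /\<^sub>R fact k)"
    using exp_converges[of "norm z"] by (intro sum_le_suminf) (auto simp: sums_iff)
  also have "\<dots> = exp (norm z)"
    using exp_converges[of "norm z"] by (simp add: sums_iff)
  finally show ?thesis .
qed

lemma has_integral_of_real_c:
  assumes "(f has_integral I) S"
  shows "((\<lambda>x. complex_of_real (f x)) has_integral complex_of_real I) S"
  using has_integral_linear[OF assms bounded_linear_of_real] by (simp add: o_def)

context
  fixes a e :: real
  assumes a: "0 < a" "a \<le> 1/2" and e: "0 < e"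
begin

lemma powr_le_sqrt: assumes b: "b \<ge> 0" shows "b powr a \<le> 1 + sqrt b"
proof (cases "b \<le> 1")
  case True
  from b have "b powr a \<le> 1" using True a by (intro powr_le1) auto
  thus ?thesis using real_sqrt_ge_zero[OF b] by linarith
next
  case False
  hence "b powr a \<le> b powr (1/2)" using a by (intro powr_mono) auto
  thus ?thesis using False by (simp add: powr_half_sqrt)
qed

lemma H_bound:
  assumes r: "r > 0" and b: "b \<ge> 0"
  shows "exp (e * b powr a) * exp (-r*b) \<le> exp (e + e^2/(2*r)) * exp (-(r/2)*b)"
proof -
  have sq: "sqrt b * sqrt b = b" using b by simp
  have "0 \<le> (r * sqrt b - e)^2 / (2*r)" using r by simp
  also have "(r * sqrt b - e)^2 / (2*r) = (r/2)*b - e * sqrt b + e^2/(2*r)"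
    using r sq by (simp add: power2_eq_square field_simps)
  finally have 1: "e * sqrt b \<le> (r/2)*b + e^2/(2*r)" by linarith
  have "e * b powr a \<le> e * (1 + sqrt b)" using powr_le_sqrt[OF b] e by simp
  hence "e * b powr a - r*b \<le> e + e^2/(2*r) - (r/2)*b" using 1 by (simp add: algebra_simps)
  hence "exp (e * b powr a + (-r*b)) \<le> exp ((e + e^2/(2*r)) + (-(r/2)*b))" by simp
  thus ?thesis by (simp only: exp_add)
qed

lemma H_int:
  assumes r: "r > 0"
  shows "(\<lambda>b. exp (e + e^2/(2*r)) * exp (-(r/2)*b)) integrable_on {0..}"
proof -
  have "(\<lambda>b. exp (-(r/2)*b)) integrable_on {0..}"
    using integrable_on_exp_minus_to_infinity[of "r/2" 0] r by simp
  from integrable_cmul[OF this, of "exp (e + e^2/(2*r))"] show ?thesis by simp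
qed

lemma gamma_pow:
  assumes r: "(r::real) > 0"
  shows "((\<lambda>b. (b powr a)^k * exp (-r*b)) has_integral Gamma (a*k+1) / r powr (a*k+1)) {0..}"
proof -
  have "((\<lambda>b. b powr (a*k) * exp (-r*b)) has_integral Gamma (a*k+1) / r powr (a*k+1)) {0..}"
    using gamma_scaled[OF r, of "a*k"] a by simp
  thus ?thesis
  proof (rule has_integral_spike[of "{0}", rotated 2])
    fix b :: real assume "b \<in> {0..} - {0}"
    hence "b > 0" by auto
    thus "(b powr a)^k * exp (-r*b) = b powr (a*k) * exp (-r*b)"
      by (simp add: powr_power mult.commute)
  qed auto
qed

lemma series_real:
  assumes r: "(r::real) > 0" and q: "norm (q::complex) \<le> 1"
  shows "(\<lambda>k. (-(of_real e * q))^k * of_real (Gamma (a*k+1) / fact k) * of_real (r powr (-(a*k+1))))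
           sums integral {0..} (\<lambda>b. exp (- of_real r * of_real b) * exp (- of_real (e * b powr a) * q))"
proof -
  define u where "u = (\<lambda>b::real. - of_real (e * b powr a) * q)"
  define f where "f = (\<lambda>N b. (\<Sum>k<N. (u b)^k /\<^sub>R fact k) * exp (- of_real r * of_real b))"
  define g where "g = (\<lambda>b. exp (u b) * exp (- of_real r * of_real b))"
  define H where "H = (\<lambda>b. exp (e + e^2/(2*r)) * exp (-(r/2)*b))"
  define t where "t = (\<lambda>k. (-(of_real e * q))^k * of_real (Gamma (a*k+1) / fact k) * of_real (r powr (-(a*k+1))) :: complex)"
  have fi: "(f N has_integral (\<Sum>k<N. t k)) {0..}" for N
  proof -
    have "((\<lambda>b. \<Sum>k<N. (-(of_real e * q))^k * of_real ((b powr a)^k * exp (-r*b) / fact k))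
            has_integral (\<Sum>k<N. t k)) {0..}"
    proof (rule has_integral_sum, simp)
      fix k assume "k \<in> {..<N}"
      have "((\<lambda>b. (b powr a)^k * exp (-r*b) / fact k) has_integral Gamma (a*k+1) / r powr (a*k+1) / fact k) {0..}"
        using has_integral_mult_left[OF gamma_pow[OF r, of k], of "1 / fact k"] by simp
      note H0 = has_integral_mult_right[OF has_integral_of_real_c[OF this], of "(-(of_real e * q))^k"]
      have rp: "complex_of_real (r powr (-(a*k+1))) = inverse (complex_of_real (r powr (a*k+1)))"
        by (simp only: powr_minus of_real_inverse)
      show "((\<lambda>b. (-(of_real e * q))^k * of_real ((b powr a)^k * exp (-r*b) / fact k)) has_integral t k) {0..}"
        using H0 unfolding t_def rp by (simp add: divide_inverse ac_simps)
    qed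
    thus ?thesis
    proof (rule has_integral_eq[rotated], goal_cases)
      case (1 b)
      have uk: "(u b)^k = (-(of_real e * q))^k * of_real (b powr a) ^ k" for k
      proof -
        have "u b = (-(of_real e * q)) * of_real (b powr a)" by (simp add: u_def)
        thus ?thesis by (simp only: power_mult_distrib)
      qed
      have "(u b)^k /\<^sub>R fact k * exp (- of_real r * of_real b) =
            (-(of_real e * q))^k * of_real ((b powr a)^k * exp (-r*b) / fact k)" for k
        unfolding uk by (simp add: scaleR_conv_of_real exp_of_real[symmetric] field_simps)
      thus ?case unfolding f_def sum_distrib_right by simp
    qed
  qed
  have le: "norm (f N b) \<le> H b" if "b \<in> {0..}" for N b
  proof -
    have nu: "norm (u b) \<le> e * b powr a"
      using that e q by (simp add: u_def norm_mult mult_left_le)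
    have "norm (f N b) \<le> exp (norm (u b)) * exp (-r*b)"
      unfolding f_def norm_mult using norm_expsum[where N=N and z="u b"]
      by (simp add: norm_exp_eq_Re)
    also have "\<dots> \<le> exp (e * b powr a) * exp (-r*b)"
      using nu by simp
    also have "\<dots> \<le> H b" unfolding H_def using H_bound[OF r] that by simp
    finally show ?thesis .
  qed
  have conv: "(\<lambda>N. f N b) \<longlonglongrightarrow> g b" if "b \<in> {0..}" for b
    unfolding f_def g_def
    by (intro tendsto_mult_right) (use exp_converges[of "u b"] in \<open>simp add: sums_def\<close>)
  have fint: "f N integrable_on {0..}" for N using fi by (auto simp: integrable_on_def)
  have "(\<lambda>N. integral {0..} (f N)) \<longlonglongrightarrow> integral {0..} g"
    using Equivalence_Lebesgue_Henstock_Integration.dominated_convergence(2)[OF fint H_int[OF r, folded H_def] le conv]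
    by (simp add: H_def)
  moreover have "integral {0..} (f N) = (\<Sum>k<N. t k)" for N
    using fi[of N] by (rule integral_unique)
  ultimately have "(\<lambda>N. \<Sum>k<N. t k) \<longlonglongrightarrow> integral {0..} g"
    by simp
  hence "t sums integral {0..} g" by (simp add: sums_def)
  thus ?thesis unfolding t_def g_def u_def by (simp add: mult.commute)
qed

end


definition co :: "real \<Rightarrow> real \<Rightarrow> nat \<Rightarrow> complex" where
  "co a e k = (-(of_real e * wc a))^k * of_real (Gamma (a*k+1) / fact k)"
definition Ser :: "real \<Rightarrow> real \<Rightarrow> complex \<Rightarrow> complex" where
  "Ser a e z = (\<Sum>k. co a e k * z powr (- of_real (a*k+1)))"

context
  fixes a e :: real
  assumes a: "0 < a" "a \<le> 1/2" and e: "0 < e"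
begin

lemma a1: "a < 1" using a by simp

lemma ak_nonneg: "0 \<le> a * real k" using a by simp

lemma gpos: "Gamma (a * real k + 1) > 0"
  by (rule Gamma_real_pos) (use ak_nonneg[of k] in linarith)

lemma Ser_real:
  assumes r: "r > 0"
  shows "Ser a e (of_real r) = Phi a e (of_real r)"
proof -
  have "norm (wc a) \<le> 1" by (simp add: norm_wc)
  from series_real[OF a e r this]
  have "(\<lambda>k. co a e k * of_real r powr (- of_real (a*k+1))) sums Phi a e (of_real r)"
    using r by (simp add: co_def Phi_def gf_def powr_of_real[symmetric] mult.assoc)
  thus ?thesis by (simp add: Ser_def sums_iff)
qed

definition M where "M d k = e^k * (Gamma (a*k+1) / fact k) * d powr (-(a*k+1))"

lemma M_summable:
  assumes d: "d > 0"
  shows "summable (M d)"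
proof -
  have "norm (-1::complex) \<le> 1" by simp
  from series_real[OF a e d this]
  have "summable (\<lambda>k. complex_of_real (M d k))"
    by (auto simp: M_def sums_iff)
  thus ?thesis by simp
qed

lemma bound_summable:
  assumes d: "d > 0"
  shows "summable (\<lambda>k. e^k * (Gamma (a * real k + 1) / fact k) * d powr (-(a * real k + 1)))"
proof -
  have "M d = (\<lambda>k. e^k * (Gamma (a * real k + 1) / fact k) * d powr (-(a * real k + 1)))"
    by (rule ext) (simp add: M_def)
  with M_summable[OF d] show ?thesis by simp
qed

lemma norm_term:
  assumes "z \<noteq> 0"
  shows "norm (co a e k * z powr (- of_real (a*k+1))) = e^k * (Gamma (a*k+1) / fact k) * norm z powr (-(a*k+1))"
proof -
  have g: "Gamma (a*k+1) > 0" by (rule gpos)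
  have "norm (co a e k) = e^k * (Gamma (a*k+1) / fact k)"
    using e g by (simp add: co_def norm_mult norm_power norm_wc norm_divide)
  moreover have "norm (z powr (- of_real (a*k+1))) = norm z powr (-(a*k+1))"
    by (subst norm_powr_real_powr') auto
  ultimately show ?thesis by (simp add: norm_mult)
qed

definition Ad where "Ad d = {z. Re z \<ge> 0 \<and> norm z \<ge> d}"

lemma Ser_unif:
  assumes d: "d > 0"
  shows "uniform_limit (Ad d) (\<lambda>n z. \<Sum>k<n. co a e k * z powr (- of_real (a*k+1))) (Ser a e) sequentially"
  unfolding Ser_def
proof (rule Weierstrass_m_test[OF _ M_summable[OF d]])
  fix k z assume z: "z \<in> Ad d"
  hence nz: "norm z \<ge> d" by (auto simp: Ad_def)
  hence "z \<noteq> 0" using d by auto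
  have "norm z powr (-(a * real k+1)) \<le> d powr (-(a * real k+1))"
    using nz d ak_nonneg[of k] by (intro powr_mono2') auto
  moreover have "Gamma (a*k+1) > 0" by (rule gpos)
  ultimately show "norm (co a e k * z powr (- of_real (a*k+1))) \<le> M d k"
    unfolding norm_term[OF \<open>z \<noteq> 0\<close>] M_def using e
    by (intro mult_left_mono) auto
qed

lemma partial_cont: "continuous_on (Ad d) (\<lambda>z. \<Sum>k<n. co a e k * z powr (- of_real (a*k+1)))"
  if "d > 0" for d n
  using that by (intro continuous_intros continuous_on_powr_complex) (auto simp: Ad_def)

lemma Ser_cont:
  assumes d: "d > 0"
  shows "continuous_on (Ad d) (Ser a e)"
  by (rule uniform_limit_theorem[OF _ Ser_unif[OF d]], rule always_eventually, rule allI, rule partial_cont[OF d]) simp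

lemma Ser_holo: "Ser a e holomorphic_on {z. Re z > 0}"
proof -
  have "Ser a e analytic_on {z. Re z > 0}"
    unfolding analytic_on_def
  proof
    fix z0 :: complex assume z0: "z0 \<in> {z. Re z > 0}"
    define r where "r = Re z0 / 2"
    have r: "r > 0" using z0 by (simp add: r_def)
    have sub0: "cball z0 r \<subseteq> {z. Re z > 0}"
    proof
      fix w assume "w \<in> cball z0 r"
      hence "cmod (z0 - w) \<le> r" by (simp add: dist_norm)
      moreover have "\<bar>Re (z0 - w)\<bar> \<le> cmod (z0 - w)" by (rule abs_Re_le_cmod)
      ultimately show "w \<in> {z. Re z > 0}" using z0 by (auto simp: r_def)
    qed
    have sub: "cball z0 r \<subseteq> Ad r"
    proof
      fix w assume "w \<in> cball z0 r"
      hence "cmod (z0 - w) \<le> r" by (simp add: dist_norm)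
      moreover have "\<bar>Re (z0 - w)\<bar> \<le> cmod (z0 - w)" by (rule abs_Re_le_cmod)
      moreover have "Re w \<le> cmod w" by (rule complex_Re_le_cmod)
      ultimately show "w \<in> Ad r" using z0 by (auto simp: r_def Ad_def)
    qed
    have sub1: "ball z0 r \<subseteq> {z. Re z > 0}" using sub0 ball_subset_cball by blast
    have hol: "(\<lambda>z. \<Sum>k<n. co a e k * z powr (- of_real (a*k+1))) holomorphic_on {z. Re z > 0}" for n
      by (intro holomorphic_intros) (auto simp: nonpos_Reals_def)
    obtain "continuous_on (cball z0 r) (Ser a e)" "Ser a e holomorphic_on ball z0 r"
      by (rule holomorphic_uniform_limit[OF _ uniform_limit_on_subset[OF Ser_unif[OF r] sub]])
         (intro always_eventually allI conjI holomorphic_on_imp_continuous_on holomorphic_on_subset[OF hol],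
          use sub0 sub1 in auto)
    thus "\<exists>r>0. Ser a e holomorphic_on ball z0 r" using r by blast
  qed
  thus ?thesis by (rule analytic_imp_holomorphic)
qed

lemma Phi_eq_Ser: "Re z > 0 \<Longrightarrow> Phi a e z = Ser a e z"
proof -
  assume z: "Re z > 0"
  have "(\<lambda>z. Phi a e z - Ser a e z) z = 0"
  proof (rule analytic_continuation[where S="{z. Re z > 0}" and U="of_real ` {0<..}" and \<xi>=1
        and f="\<lambda>z. Phi a e z - Ser a e z" and w=z])
    show "(\<lambda>z. Phi a e z - Ser a e z) holomorphic_on {z. Re z > 0}"
      by (intro holomorphic_intros Phi_holo[OF a(1) a1 e] Ser_holo)
    show "open {z. Re z > 0}" by (rule open_halfspace_Re_gt)
    show "connected {z. Re z > 0}" by (rule convex_connected[OF convex_halfspace_Re_gt])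
    show "of_real ` {0<..} \<subseteq> {z. Re z > 0}" by auto
    show "1 \<in> {z. 0 < Re z}" by simp
    show "1 islimpt (of_real ` {0<..} :: complex set)"
      unfolding islimpt_approachable
    proof (intro allI impI)
      fix \<epsilon> :: real assume "\<epsilon> > 0"
      have m: "complex_of_real (1 + \<epsilon>/2) \<in> of_real ` {0<..}"
        by (rule imageI) (use \<open>\<epsilon> > 0\<close> in simp)
      have n: "complex_of_real (1 + \<epsilon>/2) \<noteq> 1"
        using \<open>\<epsilon> > 0\<close> by (metis of_real_1 of_real_eq_iff add_cancel_left_right half_gt_zero_iff less_irrefl)
      have "dist (complex_of_real (1 + \<epsilon>/2)) (complex_of_real 1) = \<epsilon>/2"
        by (subst dist_of_real) (use \<open>\<epsilon> > 0\<close> in \<open>simp add: dist_real_def\<close>)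
      hence d: "dist (complex_of_real (1 + \<epsilon>/2)) 1 < \<epsilon>" using \<open>\<epsilon> > 0\<close> by simp
      from m n d show "\<exists>x'\<in>of_real ` {(0::real)<..}. (x'::complex) \<noteq> 1 \<and> dist x' 1 < \<epsilon>" by blast
    qed
    show "\<And>w. w \<in> of_real ` {0<..} \<Longrightarrow> Phi a e w - Ser a e w = 0"
      using Ser_real by auto
    show "z \<in> {z. Re z > 0}" using z by simp
  qed
  thus ?thesis by simp
qed

lemma Phi_eq_Ser_imag:
  assumes y: "y > 0"
  shows "Phi a e (\<i> * of_real y) = Ser a e (\<i> * of_real y)"
proof -
  define zs where "zs = (\<lambda>n::nat. of_real (1 / (real n + 1)) + \<i> * of_real y)"
  have lim: "zs \<longlonglongrightarrow> \<i> * of_real y"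
  proof -
    have "(\<lambda>n. 1 / (real n + 1)) \<longlonglongrightarrow> 0"
      using LIMSEQ_inverse_real_of_nat by (simp add: inverse_eq_divide add.commute)
    hence "(\<lambda>n. of_real (1 / (real n + 1)) :: complex) \<longlonglongrightarrow> of_real 0"
      by (rule tendsto_of_real)
    from tendsto_add[OF this tendsto_const[of "\<i> * of_real y"]]
    show ?thesis by (simp add: zs_def)
  qed
  have inA: "zs n \<in> Ad y" for n
  proof -
    have "\<bar>Im (zs n)\<bar> \<le> cmod (zs n)" by (rule abs_Im_le_cmod)
    thus ?thesis using y by (auto simp: zs_def Ad_def)
  qed
  have iA: "\<i> * of_real y \<in> Ad y" using y by (auto simp: Ad_def norm_mult)
  have 1: "(\<lambda>n. Ser a e (zs n)) \<longlonglongrightarrow> Ser a e (\<i> * of_real y)"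
    by (rule continuous_on_tendsto_compose[OF Ser_cont[OF y] lim iA]) (use inA in auto)
  have 2: "(\<lambda>n. Phi a e (zs n)) \<longlonglongrightarrow> Phi a e (\<i> * of_real y)"
    by (rule continuous_on_tendsto_compose[OF Phi_cont[OF a(1) a1 e] lim]) (auto simp: zs_def)
  have "Phi a e (zs n) = Ser a e (zs n)" for n
    by (rule Phi_eq_Ser) (auto simp: zs_def)
  with 2 have "(\<lambda>n. Ser a e (zs n)) \<longlonglongrightarrow> Phi a e (\<i> * of_real y)" by simp
  from LIMSEQ_unique[OF this 1] show ?thesis .
qed

end


lemma has_integral_reflect_set:
  fixes f :: "real \<Rightarrow> 'b::banach"
  assumes "(f has_integral i) S"
  shows "((\<lambda>x. f (-x)) has_integral i) (uminus ` S)"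
proof -
  define g where "g = (\<lambda>x. if x \<in> S then f x else 0)"
  have eq: "(\<lambda>x. if x \<in> uminus ` S then f (-x) else 0) = (\<lambda>x. g (-x))"
    by (auto simp: g_def fun_eq_iff image_iff)
  from assms have A: "\<forall>a b. g integrable_on cbox a b"
    and B: "\<forall>e>0. \<exists>B>0. \<forall>a b. ball 0 B \<subseteq> cbox a b \<longrightarrow> norm (integral (cbox a b) g - i) < e"
    unfolding has_integral_alt'[of f i S] g_def by blast+
  have A': "(\<lambda>x. g (-x)) integrable_on cbox a b" for a b :: real
    using A[rule_format, of "-b" "-a"] Henstock_Kurzweil_Integration.integrable_reflect_real[where f=g and a="-b" and b="-a"] by (simp add: box_real)
  have I': "integral (cbox a b) (\<lambda>x. g (-x)) = integral (cbox (-b) (-a)) g" for a b :: real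
  proof -
    have "(g has_integral integral (cbox (-b) (-a)) g) {-b..-a}"
      using A[rule_format, of "-b" "-a"] by (simp add: box_real has_integral_integral)
    hence "((\<lambda>x. g (-x)) has_integral integral (cbox (-b) (-a)) g) {a..b}"
      using has_integral_reflect_real[where f=g and a="-b" and b="-a"] by simp
    thus ?thesis by (simp add: box_real integral_unique)
  qed
  show ?thesis
    unfolding has_integral_alt'[of _ i] eq
  proof (intro conjI allI impI)
    fix a b :: real show "(\<lambda>x. g (-x)) integrable_on cbox a b" by (rule A')
  next
    fix e :: real assume "e > 0"
    then obtain B where B0: "B > 0" and BB: "\<And>a b. ball 0 B \<subseteq> cbox a b \<Longrightarrow> norm (integral (cbox a b) g - i) < e"
      using B by blast
    show "\<exists>B>0. \<forall>a b. ball 0 B \<subseteq> cbox a b \<longrightarrow> norm (integral (cbox a b) (\<lambda>x. g (-x)) - i) < e"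
    proof (intro exI[of _ B] conjI allI impI B0)
      fix a b :: real assume sub: "ball 0 B \<subseteq> cbox a b"
      have "ball 0 B \<subseteq> cbox (-b) (-a)"
      proof
        fix x :: real assume "x \<in> ball 0 B"
        hence "-x \<in> ball 0 B" by (simp add: dist_norm)
        hence "-x \<in> cbox a b" using sub by blast
        thus "x \<in> cbox (-b) (-a)" by (auto simp: box_real)
      qed
      thus "norm (integral (cbox a b) (\<lambda>x. g (-x)) - i) < e" using BB I' by simp
    qed
  qed
qed

context
  fixes a e :: real
  assumes a: "0 < a" "a \<le> 1/2" and e: "0 < e"
begin

lemma p_stable_Phi:
  assumes y: "y > 0"
  shows "p_stable a a e y = (Phi a e (\<i> * of_real y) + cnj (Phi a e (\<i> * of_real y))) / (2 * of_real pi)"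
proof -
  have a1: "a < 1" using a by simp
  define F where "F = (\<lambda>b::real. exp (- \<i> * complex_of_real (b * y)) *
        exp (- complex_of_real (e * \<bar>b\<bar> powr a) *
             exp (- \<i> * complex_of_real (pi * a / 2 * sgn b))))"
  define P where "P = Phi a e (\<i> * of_real y)"
  have int: "(\<lambda>b. exp (- (\<i> * of_real y) * of_real b) * gf a e b) integrable_on {0..}"
    by (rule integrand_int[OF a(1) a1 e]) simp
  have hP: "((\<lambda>b. exp (- (\<i> * of_real y) * of_real b) * gf a e b) has_integral P) {0..}"
    using int by (simp add: P_def Phi_def has_integral_integral)
  have h1: "(F has_integral P) {0..}"
  proof (rule has_integral_eq[OF _ hP])
    fix b :: real assume "b \<in> {0..}"
    hence b: "b \<ge> 0" by simp
    have E: "complex_of_real (e * \<bar>b\<bar> powr a) * exp (- \<i> * complex_of_real (pi * a / 2 * sgn b))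
          = complex_of_real (e * b powr a) * wc a"
      using b by (cases "b = 0") (auto simp: wc_def)
    have E1: "exp (- (\<i> * of_real y) * of_real b) = exp (- \<i> * complex_of_real (b * y))"
      by (simp add: mult_ac)
    have E2: "gf a e b = exp (- complex_of_real (e * \<bar>b\<bar> powr a) * exp (- \<i> * complex_of_real (pi * a / 2 * sgn b)))"
      unfolding gf_def mult_minus_left E[unfolded mult_minus_left] by (rule refl)
    show "exp (- (\<i> * of_real y) * of_real b) * gf a e b = F b"
      unfolding F_def E1 E2 by (rule refl)
  qed
  have hC: "((\<lambda>b. cnj (exp (- (\<i> * of_real y) * of_real b) * gf a e b)) has_integral cnj P) {0..}"
    using has_integral_cnj[of "\<lambda>b. exp (- (\<i> * of_real y) * of_real b) * gf a e b" P "{0..}"] hP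
    by (simp add: o_def)
  have h2: "((\<lambda>b. F (-b)) has_integral cnj P) {0..}"
  proof (rule has_integral_eq[OF _ hC])
    fix b :: real assume "b \<in> {0..}"
    hence b: "b \<ge> 0" by simp
    have E: "complex_of_real (e * \<bar>-b\<bar> powr a) * exp (- \<i> * complex_of_real (pi * a / 2 * sgn (-b)))
          = complex_of_real (e * b powr a) * cnj (wc a)"
      using b by (cases "b = 0") (auto simp: wc_def exp_cnj)
    have E1: "cnj (exp (- (\<i> * of_real y) * of_real b)) = exp (- \<i> * complex_of_real (-b * y))"
      by (simp add: exp_cnj mult_ac)
    have E2: "cnj (gf a e b) = exp (- complex_of_real (e * \<bar>-b\<bar> powr a) * exp (- \<i> * complex_of_real (pi * a / 2 * sgn (-b))))"
    proof -
      have "cnj (gf a e b) = exp (- (complex_of_real (e * b powr a) * cnj (wc a)))"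
        by (simp add: gf_def exp_cnj)
      thus ?thesis unfolding mult_minus_left E[unfolded mult_minus_left] .
    qed
    show "cnj (exp (- (\<i> * of_real y) * of_real b) * gf a e b) = F (-b)"
      unfolding F_def complex_cnj_mult E1 E2 by (rule refl)
  qed
  have h3: "(F has_integral cnj P) {..0}"
  proof -
    have "uminus ` {0..} = {..(0::real)}"
      by (auto simp: image_iff intro!: exI[of _ "-x" for x])
    with has_integral_reflect_set[OF h2] show ?thesis by simp
  qed
  have "(F has_integral (cnj P + P)) ({..0} \<union> {0..})"
    by (rule has_integral_Un[OF h3 h1]) (auto intro: negligible_subset[OF negligible_sing[of 0]])
  moreover have "{..0} \<union> {0..} = (UNIV :: real set)" by auto
  ultimately have "integral UNIV F = cnj P + P" by (simp add: integral_unique)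
  thus ?thesis unfolding p_stable_def F_def[symmetric] P_def[symmetric]
    by (simp add: add.commute)
qed

end



lemma refl_real:
  assumes s: "(s::real) > 0"
  shows "Gamma (s+1) * sin (pi * s) / pi = s * rGamma (1-s)"
proof -
  have "rGamma (complex_of_real s) * rGamma (1 - complex_of_real s) = sin (of_real pi * of_real s) / of_real pi"
    by (rule rGamma_reflection_complex)
  hence "complex_of_real (rGamma s * rGamma (1 - s)) = complex_of_real (sin (pi * s) / pi)"
    by (simp add: rGamma_complex_of_real[symmetric] sin_of_real[symmetric])
  hence r: "rGamma s * rGamma (1 - s) = sin (pi * s) / pi" by (simp only: of_real_eq_iff)
  have ns: "s \<notin> \<int>\<^sub>\<le>\<^sub>0" using s nonpos_Ints_nonpos by fastforce
  have nz: "rGamma s \<noteq> 0" using ns by (simp add: rGamma_eq_zero_iff)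
  have "Gamma (s+1) = s * Gamma s" using Gamma_plus1[OF ns] by simp
  also have "Gamma s = inverse (rGamma s)" by (simp add: Gamma_def)
  finally have "Gamma (s+1) * sin (pi * s) / pi = s * inverse (rGamma s) * (rGamma s * rGamma (1 - s))"
    using r by simp
  also have "\<dots> = s * rGamma (1-s)" using nz by (simp add: field_simps)
  finally show ?thesis .
qed


lemma Re_ofr: "Re (complex_of_real r * z) = r * Re z"
  by simp

lemma Ln_iy:
  assumes y: "(y::real) > 0"
  shows "Ln (\<i> * of_real y) = of_real (ln y) + \<i> * of_real (pi/2)"
proof -
  have "Ln (\<i> * complex_of_real y) = Ln (complex_of_real y) + \<i> * of_real pi / 2"
    using Ln_times_ii[of "complex_of_real y"] y by simp
  thus ?thesis using y by (simp add: Ln_of_real)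
qed

context
  fixes a e :: real
  assumes a: "0 < a" "a \<le> 1/2" and e: "0 < e"
begin

lemma term_iy:
  assumes y: "y > 0"
  shows "co a e k * (\<i> * of_real y) powr (- of_real (a*k+1)) =
         of_real ((-e)^k * (Gamma (a*k+1) / fact k) * y powr (-(a*k+1))) * exp (-\<i> * of_real (pi*a*k + pi/2))"
proof -
  define A where "A = of_nat k * (- \<i> * of_real (pi*a/2))"
  define B where "B = - of_real (a*k+1) * (of_real (ln y) + \<i> * of_real (pi/2))"
  have w: "wc a ^ k = exp A" unfolding A_def wc_def by (simp only: exp_of_nat_mult)
  have p: "(\<i> * of_real y) powr (- of_real (a*k+1)) = exp B"
    using y by (simp add: powr_def Ln_iy B_def)
  have c: "co a e k = of_real ((-e)^k * (Gamma (a*k+1) / fact k)) * wc a ^ k"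
  proof -
    have "co a e k = (of_real (-e) * wc a)^k * of_real (Gamma (a*k+1) / fact k)"
      by (simp add: co_def)
    also have "\<dots> = of_real ((-e)^k) * wc a ^ k * of_real (Gamma (a*k+1) / fact k)"
      by (simp only: power_mult_distrib of_real_power)
    also have "\<dots> = of_real ((-e)^k * (Gamma (a*k+1) / fact k)) * wc a ^ k"
      by (simp only: of_real_mult mult_ac)
    finally show ?thesis .
  qed
  have AB: "A + B = of_real (-(a*k+1) * ln y) + (-\<i> * of_real (pi*a*k + pi/2))"
    unfolding A_def B_def
    by (simp only: of_real_mult of_real_add of_real_minus of_real_divide of_real_of_nat_eq of_real_numeral of_real_1) algebra
  have "co a e k * (\<i> * of_real y) powr (- of_real (a*k+1)) =
        of_real ((-e)^k * (Gamma (a*k+1) / fact k)) * exp (A + B)"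
    unfolding c w p exp_add by simp
  also have "exp (A + B) = of_real (y powr (-(a*k+1))) * exp (-\<i> * of_real (pi*a*k + pi/2))"
  proof -
    have "exp (complex_of_real (-(a*k+1) * ln y)) = of_real (y powr (-(a*k+1)))"
      using y by (simp add: powr_def exp_of_real[symmetric] mult.commute)
    thus ?thesis unfolding AB exp_add by simp
  qed
  finally show ?thesis by simp
qed

lemma Re_term_iy:
  assumes y: "y > 0"
  shows "Re (co a e k * (\<i> * of_real y) powr (- of_real (a*k+1))) =
         - ((-e)^k * (Gamma (a*k+1) / fact k) * y powr (-(a*k+1)) * sin (pi*a*k))"
proof -
  have "Re (exp (-\<i> * complex_of_real (pi*a*k + pi/2))) = - sin (pi*a*k)"
  proof -
    have "cos (- (pi * a * real k) - pi / 2) = - sin (pi * a * real k)"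
      by (simp add: cos_diff)
    thus ?thesis by (simp add: Re_exp cos_add)
  qed
  thus ?thesis unfolding term_iy[OF y] Re_ofr by simp
qed

end


context
  fixes a e :: real
  assumes a: "0 < a" "a \<le> 1/2" and e: "0 < e"
begin

lemma term_shift:
  assumes y: "y > 0"
  shows "- ((-e)^(Suc j) * (Gamma (a * real (Suc j) + 1) / fact (Suc j)) * y powr (-(a * real (Suc j) + 1))
            * sin (pi * a * real (Suc j))) / pi
         = (a / y) * ((-1)^j * (e * y powr (-a))^(Suc j) * rGamma (1 - a * real (Suc j)) / fact j)"
proof -
  define s where "s = a * real (Suc j)"
  have s: "s > 0" using a by (simp add: s_def)
  have R: "Gamma (s+1) * sin (pi * s) / pi = s * rGamma (1-s)" by (rule refl_real[OF s])
  have sin: "sin (pi * a * real (Suc j)) = sin (pi * s)" by (simp add: s_def mult.assoc)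
  have f: "fact (Suc j) = real (Suc j) * fact j" by simp
  have p1: "y powr (-(s + 1)) = (y powr (-a))^(Suc j) / y"
  proof -
    have h1: "y powr (-(s+1)) = y powr (-s) * y powr (-1)" by (subst powr_add[symmetric]) simp
    have h2: "y powr (-1) = 1 / y" using y by (simp add: powr_minus divide_inverse)
    have "y powr (-(s+1)) = y powr (-s) / y" unfolding h1 h2 by simp
    moreover have "(y powr (-a))^(Suc j) = y powr (-s)"
      using y by (subst powr_power) (auto simp: s_def mult_ac)
    ultimately show ?thesis by simp
  qed
  have ee: "(-e)^(Suc j) = - ((-1)^j * e^(Suc j))"
  proof -
    have "(-e)^(Suc j) = (-1)^(Suc j) * e^(Suc j)" by (rule power_minus)
    thus ?thesis by simp
  qed
  have "- ((-e)^(Suc j) * (Gamma (s + 1) / fact (Suc j)) * y powr (-(s + 1)) * sin (pi * s)) / pi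
        = ((-1)^j * e^(Suc j)) * (Gamma (s+1) * sin (pi * s) / pi) * y powr (-(s + 1)) / fact (Suc j)"
    unfolding ee by (simp add: field_simps)
  also have "\<dots> = ((-1)^j * e^(Suc j)) * (s * rGamma (1-s)) * ((y powr (-a))^(Suc j) / y) / (real (Suc j) * fact j)"
    unfolding R p1 f ..
  also have "\<dots> = (a / y) * ((-1)^j * (e * y powr (-a))^(Suc j) * rGamma (1 - s) / fact j)"
    unfolding s_def power_mult_distrib by (simp add: field_simps del: of_nat_Suc)
  finally show ?thesis unfolding sin s_def by simp
qed

lemma p_series:
  assumes y: "y > 0"
  obtains R where "p_stable a a e y = complex_of_real R"
    "(\<lambda>j. (a / y) * ((-1)^j * (e * y powr (-a))^(Suc j) * rGamma (1 - a * real (Suc j)) / fact j)) sums R"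
proof -
  define P where "P = Phi a e (\<i> * of_real y)"
  define t where "t = (\<lambda>k. co a e k * (\<i> * of_real y) powr (- of_real (a*k+1)))"
  have PS: "P = Ser a e (\<i> * of_real y)" unfolding P_def by (rule Phi_eq_Ser_imag[OF a e y])
  have ny: "norm (\<i> * complex_of_real y) = y" using y by (simp add: norm_mult)
  have "summable t"
  proof (rule summable_comparison_test'[OF bound_summable[OF a e y]])
    fix n :: nat
    show "norm (t n) \<le> e^n * (Gamma (a * real n + 1) / fact n) * y powr (-(a * real n + 1))"
      unfolding t_def using y by (subst norm_term[OF a e]) (auto simp: ny)
  qed
  hence "t sums P" unfolding PS Ser_def t_def by (simp add: summable_sums)
  from sums_Re[OF this] have "(\<lambda>k. Re (t k)) sums Re P" .
  from sums_divide[OF this, of pi]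
  have T: "(\<lambda>k. Re (t k) / pi) sums (Re P / pi)" .
  have Re_t: "Re (t k) = - ((-e)^k * (Gamma (a*k+1) / fact k) * y powr (-(a*k+1)) * sin (pi*a*k))" for k
    unfolding t_def by (rule Re_term_iy[OF a e y])
  have T0: "Re (t 0) / pi = 0" unfolding Re_t by simp
  have "(\<lambda>j. Re (t (Suc j)) / pi) sums (Re P / pi)"
    using T sums_Suc_iff[of "\<lambda>k. Re (t k) / pi" "Re P / pi"] T0 by simp
  hence S: "(\<lambda>j. (a / y) * ((-1)^j * (e * y powr (-a))^(Suc j) * rGamma (1 - a * real (Suc j)) / fact j)) sums (Re P / pi)"
    unfolding Re_t term_shift[OF y] by simp
  have "p_stable a a e y = (P + cnj P) / (2 * of_real pi)"
    unfolding P_def by (rule p_stable_Phi[OF a e y])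
  also have "\<dots> = complex_of_real (Re P / pi)"
    by (simp add: complex_add_cnj)
  finally show ?thesis using S that by blast
qed

end


lemma final_gen:
  fixes lam nu x t e y C :: real
  assumes "lam > 0" and "0 < nu" and "nu \<le> 1" and "x \<noteq> 0" and "t > 0"
    and e: "e > 0" and y: "y > 0"
    and W: "e * y powr (-(nu/2)) = \<bar>x\<bar> / (lam * t powr (nu/2))"
    and C: "C * (nu/2) / y = 1 / (2 * \<bar>x\<bar>)"
  shows "complex_of_real (u_nu nu lam x t) = complex_of_real C * p_stable (nu/2) (nu/2) e y"
proof -
  define a where "a = nu/2"
  have a: "0 < a" "a \<le> 1/2" using assms by (auto simp: a_def)
  define D where "D = lam * t powr (nu/2)"
  have D: "D > 0" using assms by (simp add: D_def)
  define Z where "Z = \<bar>x\<bar> / D"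
  have ax: "\<bar>x\<bar> > 0" using assms by simp
  obtain R where pR: "p_stable a a e y = complex_of_real R"
    and S: "(\<lambda>j. (a / y) * ((-1)^j * (e * y powr (-a))^(Suc j) * rGamma (1 - a * real (Suc j)) / fact j)) sums R"
    using p_series[OF a e y] by blast
  have WZ: "e * y powr (-a) = Z" using W by (simp add: a_def Z_def D_def)
  have Ca: "C * (a / y) = 1 / (2 * \<bar>x\<bar>)" using C by (simp add: a_def)
  define h where "h = (\<lambda>j. (- \<bar>x\<bar> / D) ^ j / fact j * rGamma (- nu * real j / 2 + 1 - nu / 2))"
  from sums_mult[OF S, of "2 * D * C"]
  have "(\<lambda>j. 2 * D * C * ((a / y) * ((-1)^j * (e * y powr (-a))^(Suc j) * rGamma (1 - a * real (Suc j)) / fact j)))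
          sums (2 * D * C * R)" .
  moreover have "2 * D * C * ((a / y) * ((-1)^j * (e * y powr (-a))^(Suc j) * rGamma (1 - a * real (Suc j)) / fact j))
          = h j" for j
  proof -
    have r: "1 - a * real (Suc j) = - nu * real j / 2 + 1 - nu / 2" by (simp add: a_def algebra_simps)
    have "2 * D * C * ((a / y) * ((-1)^j * (e * y powr (-a))^(Suc j) * rGamma (1 - a * real (Suc j)) / fact j))
          = 2 * D * (C * (a / y)) * ((-1)^j * Z^(Suc j) * rGamma (1 - a * real (Suc j)) / fact j)"
      unfolding WZ by simp
    also have "\<dots> = (D / \<bar>x\<bar>) * Z * ((-1)^j * Z^j * rGamma (1 - a * real (Suc j)) / fact j)"
      unfolding Ca by simp
    also have "(D / \<bar>x\<bar>) * Z = 1" using D ax by (simp add: Z_def)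
    also have "(-1)^j * Z^j = (- \<bar>x\<bar> / D) ^ j"
    proof -
      have mz: "- \<bar>x\<bar> / D = - Z" by (simp add: Z_def)
      have "(- \<bar>x\<bar> / D) ^ j = (-1)^j * Z^j" unfolding mz by (rule power_minus)
      thus ?thesis by simp
    qed
    finally show ?thesis unfolding h_def r by simp
  qed
  ultimately have hs: "h sums (2 * D * C * R)" by simp
  have "u_nu nu lam x t = 1 / (2 * D) * suminf h"
    unfolding u_nu_def h_def D_def by simp
  also have "\<dots> = C * R" using hs D by (simp add: sums_iff)
  finally have "u_nu nu lam x t = C * R" .
  thus ?thesis using pR by (simp add: a_def)
qed

lemma alg1: "(L::real) > 0 \<Longrightarrow> T > 0 \<Longrightarrow> X > 0 \<Longrightarrow> (1/L) * (1/T) / (1/X) = X/(L*T)"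
  by (simp add: field_simps)

lemma alg2: "(nu::real) > 0 \<Longrightarrow> P > 0 \<Longrightarrow> t > 0 \<Longrightarrow> Q > 0 \<Longrightarrow> X > 0 \<Longrightarrow>
    1 / nu * P * t / (Q * X) * (nu/2) / (P * t / Q) = 1 / (2 * X)"
  by (simp add: field_simps)

lemma alg3: "(nu::real) > 0 \<Longrightarrow> Q > 0 \<Longrightarrow> X > 0 \<Longrightarrow> 1 / (nu * (Q * X)) * (nu/2) / (1 / Q) = 1 / (2 * X)"
  by (simp add: field_simps)

theorem theorem5p4:
  fixes lam nu x t :: real
  assumes "lam > 0" and "0 < nu" and "nu \<le> 1" and "x \<noteq> 0" and "t > 0"
  shows "complex_of_real (u_nu nu lam x t) =
           complex_of_real (1 / nu * lam powr (2/nu) * t / \<bar>x\<bar> powr (2/nu + 1)) *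
           p_stable (nu/2) (nu/2) 1 (lam powr (2/nu) * t / \<bar>x\<bar> powr (2/nu))
       \<and> complex_of_real (u_nu nu lam x t) =
           complex_of_real (1 / (nu * \<bar>x\<bar> powr (2/nu + 1))) *
           p_stable (nu/2) (nu/2) (1 / (lam * t powr (nu/2))) (1 / \<bar>x\<bar> powr (2/nu))"
proof -
  have l: "lam > 0" and n: "nu > 0" and ax: "\<bar>x\<bar> > 0" and tt: "t > 0" using assms by auto
  have xp: "\<bar>x\<bar> powr (2/nu + 1) = \<bar>x\<bar> powr (2/nu) * \<bar>x\<bar>"
  proof -
    have "\<bar>x\<bar> powr (2/nu + 1) = \<bar>x\<bar> powr (2/nu) * \<bar>x\<bar> powr 1" by (rule powr_add)
    also have "\<bar>x\<bar> powr 1 = \<bar>x\<bar>" using ax by simp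
    finally show ?thesis .
  qed
  have m1: "(2/nu) * (-(nu/2)) = -1" using n by simp
  have xq: "(\<bar>x\<bar> powr (2/nu)) powr (-(nu/2)) = 1 / \<bar>x\<bar>"
  proof -
    have "(\<bar>x\<bar> powr (2/nu)) powr (-(nu/2)) = \<bar>x\<bar> powr (-1)" by (simp only: powr_powr m1)
    also have "\<dots> = 1 / \<bar>x\<bar> powr 1" by (rule powr_minus_divide)
    also have "\<bar>x\<bar> powr 1 = \<bar>x\<bar>" by (rule powr_one) simp
    finally show ?thesis .
  qed
  have lq: "(lam powr (2/nu)) powr (-(nu/2)) = 1 / lam"
  proof -
    have "(lam powr (2/nu)) powr (-(nu/2)) = lam powr (-1)" by (simp only: powr_powr m1)
    also have "\<dots> = 1 / lam powr 1" by (rule powr_minus_divide)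
    also have "lam powr 1 = lam" using l by (intro powr_one) simp
    finally show ?thesis .
  qed
  have tq: "t powr (-(nu/2)) = 1 / t powr (nu/2)"
    by (rule powr_minus_divide)
  show ?thesis
  proof
    show "complex_of_real (u_nu nu lam x t) =
           complex_of_real (1 / nu * lam powr (2/nu) * t / \<bar>x\<bar> powr (2/nu + 1)) *
           p_stable (nu/2) (nu/2) 1 (lam powr (2/nu) * t / \<bar>x\<bar> powr (2/nu))"
    proof (rule final_gen[OF assms])
      show "(1::real) > 0" by simp
      show "lam powr (2/nu) * t / \<bar>x\<bar> powr (2/nu) > 0" using l tt ax by simp
      have pd: "(lam powr (2/nu) * t / \<bar>x\<bar> powr (2/nu)) powr (-(nu/2))
            = (lam powr (2/nu) * t) powr (-(nu/2)) / (\<bar>x\<bar> powr (2/nu)) powr (-(nu/2))"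
        by (rule powr_divide)
      have pm: "(lam powr (2/nu) * t) powr (-(nu/2)) = (lam powr (2/nu)) powr (-(nu/2)) * t powr (-(nu/2))"
        by (rule powr_mult)
      have "(lam powr (2/nu) * t / \<bar>x\<bar> powr (2/nu)) powr (-(nu/2))
            = (1 / lam) * (1 / t powr (nu/2)) / (1 / \<bar>x\<bar>)"
        unfolding pd pm lq tq xq ..
      also have "\<dots> = \<bar>x\<bar> / (lam * t powr (nu/2))"
        by (rule alg1) (use l tt ax in simp_all)
      finally show "1 * (lam powr (2/nu) * t / \<bar>x\<bar> powr (2/nu)) powr (-(nu/2)) = \<bar>x\<bar> / (lam * t powr (nu/2))"
        by simp
      show "1 / nu * lam powr (2/nu) * t / \<bar>x\<bar> powr (2/nu + 1) * (nu/2) /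
              (lam powr (2/nu) * t / \<bar>x\<bar> powr (2/nu)) = 1 / (2 * \<bar>x\<bar>)"
        unfolding xp by (rule alg2) (use l tt ax n in simp_all)
    qed
  next
    show "complex_of_real (u_nu nu lam x t) =
           complex_of_real (1 / (nu * \<bar>x\<bar> powr (2/nu + 1))) *
           p_stable (nu/2) (nu/2) (1 / (lam * t powr (nu/2))) (1 / \<bar>x\<bar> powr (2/nu))"
    proof (rule final_gen[OF assms])
      show "1 / (lam * t powr (nu/2)) > 0" using l tt by simp
      show "1 / \<bar>x\<bar> powr (2/nu) > 0" using ax by simp
      have "(1 / \<bar>x\<bar> powr (2/nu)) powr (-(nu/2)) = 1 powr (-(nu/2)) / (\<bar>x\<bar> powr (2/nu)) powr (-(nu/2))"
        by (rule powr_divide)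
      also have "\<dots> = \<bar>x\<bar>" unfolding xq using ax by simp
      finally show "1 / (lam * t powr (nu/2)) * (1 / \<bar>x\<bar> powr (2/nu)) powr (-(nu/2))
                    = \<bar>x\<bar> / (lam * t powr (nu/2))" by simp
      show "1 / (nu * \<bar>x\<bar> powr (2/nu + 1)) * (nu/2) / (1 / \<bar>x\<bar> powr (2/nu)) = 1 / (2 * \<bar>x\<bar>)"
        unfolding xp by (rule alg3) (use ax n in simp_all)
    qed
  qed
qed


end
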